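(* Let $k$ be a field and $B$ a standard graded $k$-algebra of dimension $d$ with homogeneous maximal ideal $\mathfrak{m}$. Let $s\ge0$ be an integer and let $A$ be the $k$-subalgebra of $B$ generated by $d+s$ linear forms $x_1,\ldots,x_{d+s}$ of $B$. Then \[\mathfrak{m}^n=(x_1,\ldots,x_{d-1})\mathfrak{m}^{n-1}+(x_d,\ldots,x_{d+s})^n\quad\text{for all } n\gg0\] if and only if $B/A$ is a finite module over $k[x_1,\ldots,x_{d-1}]$.
   Context: A standard graded $k$-algebra is a graded $k$-algebra $B=\bigoplus_{i\ge0}B_i$ with $B_0=k$, generated as a $k$-algebra by finitely many elements of $B_1$ (linear forms). The ideals in the displayed equation are ideals of $B$. *)

theory Defs
  imports "HOL-Algebra.Ideal_Product" "HOL-Algebra.Generated_Rings" "HOL-Algebra.Subrings"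
begin

definition standard_graded :: "('a, 'b) ring_scheme \<Rightarrow> (nat \<Rightarrow> 'a set) \<Rightarrow> bool" where
  "standard_graded R Bg \<longleftrightarrow>
     cring R \<and>
     (\<forall>i. additive_subgroup (Bg i) R) \<and>
     (\<forall>i j. \<forall>a\<in>Bg i. \<forall>b\<in>Bg j. a \<otimes>\<^bsub>R\<^esub> b \<in> Bg (i + j)) \<and>
     (\<forall>x\<in>carrier R. \<exists>!c::nat \<Rightarrow> 'a. (\<forall>i. c i \<in> Bg i) \<and>
          (\<exists>N. (\<forall>i>N. c i = \<zero>\<^bsub>R\<^esub>) \<and> x = finsum R c {..N})) \<and>
     subfield (Bg 0) R \<and>
     (\<exists>G. finite G \<and> G \<subseteq> Bg 1 \<and> carrier R = generate_ring R (Bg 0 \<union> G))"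

definition hom_max_ideal :: "('a, 'b) ring_scheme \<Rightarrow> (nat \<Rightarrow> 'a set) \<Rightarrow> 'a set" where
  "hom_max_ideal R Bg = Idl\<^bsub>R\<^esub> (\<Union>i\<in>{1..}. Bg i)"

definition ideal_power :: "('a, 'b) ring_scheme \<Rightarrow> 'a set \<Rightarrow> nat \<Rightarrow> 'a set" where
  "ideal_power R I n = ((\<lambda>J. ideal_prod R I J) ^^ n) (carrier R)"

definition has_prime_chain :: "('a, 'b) ring_scheme \<Rightarrow> nat \<Rightarrow> bool" where
  "has_prime_chain R n \<longleftrightarrow>
     (\<exists>P :: nat \<Rightarrow> 'a set. (\<forall>i\<le>n. primeideal (P i) R) \<and> (\<forall>i<n. P i \<subset> P (Suc i)))"

definition krull_dim_eq :: "('a, 'b) ring_scheme \<Rightarrow> nat \<Rightarrow> bool" where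
  "krull_dim_eq R d \<longleftrightarrow> has_prime_chain R d \<and> \<not> has_prime_chain R (Suc d)"

text \<open>For subrings S \<subseteq> A \<subseteq> R: R/A is a finitely generated S-module, i.e. there is a
  finite F such that every element of R is a + sum_(f in F) r_f f with a in A, r_f in S.\<close>
definition finite_quotient_module ::
  "('a, 'b) ring_scheme \<Rightarrow> 'a set \<Rightarrow> 'a set \<Rightarrow> bool" where
  "finite_quotient_module R S A \<longleftrightarrow>
     (\<exists>F. finite F \<and> F \<subseteq> carrier R \<and>
        (\<forall>b\<in>carrier R. \<exists>a\<in>A. \<exists>r. r ` F \<subseteq> S \<and>
            b = a \<oplus>\<^bsub>R\<^esub> finsum R (\<lambda>f. r f \<otimes>\<^bsub>R\<^esub> f) F))"

end

theory Submission
  imports Defs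
begin

locale sg = fixes R (structure) and Bg :: "nat \<Rightarrow> 'a set"
  assumes sg: "standard_graded R Bg"

sublocale sg \<subseteq> cring R using sg unfolding standard_graded_def by auto

context sg begin

lemma Bg_sub: "additive_subgroup (Bg i) R" using sg unfolding standard_graded_def by auto
lemma Bg_carr: "Bg i \<subseteq> carrier R" using Bg_sub[of i] by (simp add: additive_subgroup.a_subset)
lemma Bg_zero: "\<zero> \<in> Bg i" using Bg_sub[of i] by (simp add: additive_subgroup.zero_closed)
lemma Bg_add: "a \<in> Bg i \<Longrightarrow> b \<in> Bg i \<Longrightarrow> a \<oplus> b \<in> Bg i" using Bg_sub[of i] by (simp add: additive_subgroup.a_closed)
lemma Bg_neg: "a \<in> Bg i \<Longrightarrow> \<ominus> a \<in> Bg i" using Bg_sub[of i] by (simp add: additive_subgroup.a_inv_closed)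
lemma Bg_mult: "a \<in> Bg i \<Longrightarrow> b \<in> Bg j \<Longrightarrow> a \<otimes> b \<in> Bg (i+j)" using sg unfolding standard_graded_def by auto
lemma B0_subring: "subring (Bg 0) R" using sg unfolding standard_graded_def
  by (auto intro: subfieldE(1))
lemma Bg_one: "\<one> \<in> Bg 0" using B0_subring by (simp add: subringE(3))
lemma decomp: "x \<in> carrier R \<Longrightarrow> \<exists>!c::nat \<Rightarrow> 'a. (\<forall>i. c i \<in> Bg i) \<and>
          (\<exists>N. (\<forall>i>N. c i = \<zero>) \<and> x = finsum R c {..N})" using sg unfolding standard_graded_def by auto

definition Pc :: "'a \<Rightarrow> (nat \<Rightarrow> 'a) \<Rightarrow> bool" where
  "Pc x c \<longleftrightarrow> (\<forall>i. c i \<in> Bg i) \<and> (\<exists>N. (\<forall>i>N. c i = \<zero>) \<and> x = finsum R c {..N})"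

definition comp :: "'a \<Rightarrow> nat \<Rightarrow> 'a" where "comp x = (THE c. Pc x c)"

lemma Bg_in_carr: "a \<in> Bg i \<Longrightarrow> a \<in> carrier R" using Bg_carr by blast

lemma comp_P: "x \<in> carrier R \<Longrightarrow> Pc x (comp x)"
  unfolding comp_def using decomp[of x] theI'[of "Pc x"] unfolding Pc_def by blast

lemma comp_unique: "x \<in> carrier R \<Longrightarrow> Pc x c \<Longrightarrow> comp x = c"
  unfolding comp_def using decomp[of x] the1_equality[of "Pc x" c] unfolding Pc_def by blast

lemma comp_in: "x \<in> carrier R \<Longrightarrow> comp x i \<in> Bg i"
  using comp_P unfolding Pc_def by blast

lemma comp_carr: "x \<in> carrier R \<Longrightarrow> comp x i \<in> carrier R"
  using comp_in Bg_carr by blast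

lemma finsum_ext:
  fixes N M :: nat
  assumes "\<And>i. c i \<in> carrier R" "\<And>i. i > N \<Longrightarrow> c i = \<zero>" "N \<le> M"
  shows "finsum R c {..M} = finsum R c {..N}"
by (rule add.finprod_mono_neutral_cong_left[symmetric]) (use assms in \<open>auto simp: not_le\<close>)

lemma comp_expand: "x \<in> carrier R \<Longrightarrow> \<exists>N. (\<forall>i>N. comp x i = \<zero>) \<and> (\<forall>M\<ge>N. x = finsum R (comp x) {..M})"
proof -
  assume x: "x \<in> carrier R"
  then obtain N where N: "\<forall>i>N. comp x i = \<zero>" "x = finsum R (comp x) {..N}"
    using comp_P unfolding Pc_def by blast
  have "\<forall>M\<ge>N. x = finsum R (comp x) {..M}"
    using finsum_ext[of "comp x" N] N comp_carr[OF x] by auto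
  with N show ?thesis by blast
qed

lemma comp_intro:
  assumes "x \<in> carrier R" "\<And>i. c i \<in> Bg i" "\<And>i. i > N \<Longrightarrow> c i = \<zero>" "x = finsum R c {..N}"
  shows "comp x = c"
  using assms comp_unique unfolding Pc_def by blast

lemma comp_homog: assumes "a \<in> Bg j" shows "comp a = (\<lambda>i. if i = j then a else \<zero>)"
proof (rule comp_intro[where N=j])
  show "a \<in> carrier R" using assms Bg_carr by blast
  show "(\<lambda>i. if i = j then a else \<zero>) i \<in> Bg i" for i using assms Bg_zero by auto
  show "(\<lambda>i. if i = j then a else \<zero>) i = \<zero>" if "i > j" for i using that by auto
  have "finsum R (\<lambda>i. if i = j then a else \<zero>) {..j} = a"
    using add.finprod_singleton_swap[of j "{..j}" "\<lambda>_. a"] assms Bg_carr by auto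
  then show "a = finsum R (\<lambda>i. if i = j then a else \<zero>) {..j}" by simp
qed

lemma comp_homog': "a \<in> Bg j \<Longrightarrow> comp a i = (if i = j then a else \<zero>)"
  using comp_homog by simp

lemma comp_zero: "comp \<zero> i = \<zero>"
  using comp_homog'[OF Bg_zero[of 0]] by simp

lemma comp_add: assumes x: "x \<in> carrier R" and y: "y \<in> carrier R"
  shows "comp (x \<oplus> y) i = comp x i \<oplus> comp y i"
proof -
  obtain N1 where N1: "\<forall>i>N1. comp x i = \<zero>" "\<forall>M\<ge>N1. x = finsum R (comp x) {..M}"
    using comp_expand[OF x] by blast
  obtain N2 where N2: "\<forall>i>N2. comp y i = \<zero>" "\<forall>M\<ge>N2. y = finsum R (comp y) {..M}"
    using comp_expand[OF y] by blast
  let ?M = "max N1 N2"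
  have "comp (x \<oplus> y) = (\<lambda>i. comp x i \<oplus> comp y i)"
  proof (rule comp_intro[where N="?M"])
    show "x \<oplus> y \<in> carrier R" using x y by simp
    show "comp x i \<oplus> comp y i \<in> Bg i" for i using comp_in x y Bg_add by blast
    show "comp x i \<oplus> comp y i = \<zero>" if "i > ?M" for i using that N1 N2 by simp
    have "x \<oplus> y = finsum R (comp x) {..?M} \<oplus> finsum R (comp y) {..?M}"
      using N1 N2 by simp
    also have "\<dots> = finsum R (\<lambda>i. comp x i \<oplus> comp y i) {..?M}"
      by (rule finsum_addf[symmetric]) (use comp_carr x y in auto)
    finally show "x \<oplus> y = finsum R (\<lambda>i. comp x i \<oplus> comp y i) {..?M}" .
  qed
  then show ?thesis by simp
qed

lemma comp_neg: assumes x: "x \<in> carrier R" shows "comp (\<ominus> x) i = \<ominus> comp x i"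
proof -
  have "\<zero> = comp x i \<oplus> comp (\<ominus> x) i"
    using comp_add[of x "\<ominus> x" i] x by (simp add: comp_zero r_neg)
  then show ?thesis using comp_carr x
    by (metis a_inv_closed add.inv_comm minus_equality)
qed

lemma comp_finsum: assumes "finite A" "f \<in> A \<rightarrow> carrier R"
  shows "comp (finsum R f A) i = finsum R (\<lambda>a. comp (f a) i) A"
  using assms
proof (induction A rule: finite_induct)
  case empty then show ?case by (simp add: comp_zero)
next
  case (insert a A)
  have fa: "f a \<in> carrier R" and fA: "f \<in> A \<rightarrow> carrier R" using insert by auto
  have "comp (finsum R f (insert a A)) i = comp (f a \<oplus> finsum R f A) i"
    using insert fa fA by simp
  also have "\<dots> = comp (f a) i \<oplus> comp (finsum R f A) i"
    using comp_add fa fA finsum_closed by blast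
  also have "\<dots> = finsum R (\<lambda>a. comp (f a) i) (insert a A)"
    using insert fa fA comp_carr by (simp add: Pi_def)
  finally show ?case .
qed

lemma finsum_in:
  assumes "finite A" "Z \<subseteq> carrier R" "\<zero> \<in> Z" "\<And>u v. u \<in> Z \<Longrightarrow> v \<in> Z \<Longrightarrow> u \<oplus> v \<in> Z"
    "\<And>a. a \<in> A \<Longrightarrow> f a \<in> Z"
  shows "finsum R f A \<in> Z"
  using assms(1,5)
proof (induction A rule: finite_induct)
  case empty then show ?case using assms by simp
next
  case (insert a A)
  then have "f \<in> A \<rightarrow> carrier R" "f a \<in> carrier R" using assms(2) by auto
  then show ?case using insert assms by simp
qed

lemma Bg_disj: "a \<in> Bg i \<Longrightarrow> a \<in> Bg j \<Longrightarrow> i \<noteq> j \<Longrightarrow> a = \<zero>"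
  using comp_homog'[of a i i] comp_homog'[of a j i] by simp

lemma comp_mult_in:
  assumes a: "a \<in> carrier R" and b: "b \<in> carrier R"
    and hZA: "\<And>i. comp a i \<in> ZA i" "\<And>i. ZA i \<subseteq> Bg i"
    and hZB: "\<And>j. comp b j \<in> ZB j" "\<And>j. ZB j \<subseteq> Bg j"
    and hZC: "\<And>i j u v. u \<in> ZA i \<Longrightarrow> v \<in> ZB j \<Longrightarrow> u \<otimes> v \<in> ZC (i+j)"
      "ZC k \<subseteq> carrier R" "\<zero> \<in> ZC k" "\<And>u v. u \<in> ZC k \<Longrightarrow> v \<in> ZC k \<Longrightarrow> u \<oplus> v \<in> ZC k"
  shows "comp (a \<otimes> b) k \<in> ZC k"
proof -
  obtain Na where Na: "a = finsum R (comp a) {..Na}" using comp_expand[OF a] by blast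
  obtain Nb where Nb: "b = finsum R (comp b) {..Nb}" using comp_expand[OF b] by blast
  have ca: "\<And>i. comp a i \<in> carrier R" "\<And>j. comp b j \<in> carrier R" using comp_carr a b by auto
  have "a \<otimes> b = finsum R (\<lambda>i. comp a i \<otimes> b) {..Na}"
    using Na finsum_ldistr[of "{..Na}" b "comp a"] ca b by auto
  then have "comp (a \<otimes> b) k = finsum R (\<lambda>i. comp (comp a i \<otimes> b) k) {..Na}"
    using comp_finsum[of "{..Na}" "\<lambda>i. comp a i \<otimes> b" k] ca b by auto
  also have "\<dots> \<in> ZC k"
  proof (rule finsum_in[OF _ hZC(2-4)])
    fix i
    have "comp a i \<otimes> b = finsum R (\<lambda>j. comp a i \<otimes> comp b j) {..Nb}"
      using Nb finsum_rdistr[of "{..Nb}" "comp a i" "comp b"] ca b by auto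
    then have e: "comp (comp a i \<otimes> b) k = finsum R (\<lambda>j. comp (comp a i \<otimes> comp b j) k) {..Nb}"
      using comp_finsum[of "{..Nb}" "\<lambda>j. comp a i \<otimes> comp b j" k] ca by auto
    have "finsum R (\<lambda>j. comp (comp a i \<otimes> comp b j) k) {..Nb} \<in> ZC k"
    proof (rule finsum_in[OF _ hZC(2-4)])
      fix j
      have h: "comp a i \<otimes> comp b j \<in> Bg (i+j)" using Bg_mult hZA hZB by blast
      show "comp (comp a i \<otimes> comp b j) k \<in> ZC k"
        using comp_homog'[OF h, of k] hZC(1)[OF hZA(1) hZB(1), of i j] hZC(3) by auto
    qed auto
    then show "comp (comp a i \<otimes> b) k \<in> ZC k" using e by simp
  qed auto
  finally show ?thesis .
qed


definition GZ :: "(nat \<Rightarrow> 'a set) \<Rightarrow> 'a set" where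
  "GZ Z = {z \<in> carrier R. \<forall>i. comp z i \<in> Z i}"

lemma GZ_ideal:
  assumes Zb: "\<And>i. Z i \<subseteq> Bg i" and Z0: "\<And>i. \<zero> \<in> Z i"
    and Za: "\<And>i u v. u \<in> Z i \<Longrightarrow> v \<in> Z i \<Longrightarrow> u \<oplus> v \<in> Z i"
    and Zn: "\<And>i u. u \<in> Z i \<Longrightarrow> \<ominus> u \<in> Z i"
    and Zm: "\<And>i j u v. u \<in> Bg j \<Longrightarrow> v \<in> Z i \<Longrightarrow> u \<otimes> v \<in> Z (j+i)"
  shows "ideal (GZ Z) R"
proof -
  have Zc: "Z i \<subseteq> carrier R" for i using Zb Bg_carr by blast
  have L: "x \<otimes> a \<in> GZ Z" if a: "a \<in> GZ Z" and x: "x \<in> carrier R" for a x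
  proof -
    have ac: "a \<in> carrier R" using a unfolding GZ_def by auto
    have "comp (x \<otimes> a) k \<in> Z k" for k
      by (rule comp_mult_in[where ZA=Bg and ZB=Z and ZC=Z])
        (use x ac a Zb Zc Z0 Za Zm comp_in in \<open>auto simp: GZ_def\<close>)
    then show ?thesis using x ac unfolding GZ_def by auto
  qed
  show ?thesis
  proof (rule idealI)
    show "ring R" by (rule ring_axioms)
    show "subgroup (GZ Z) (add_monoid R)"
    proof (rule add.subgroupI)
      show "GZ Z \<subseteq> carrier R" unfolding GZ_def by auto
      show "GZ Z \<noteq> {}" using Z0 comp_zero unfolding GZ_def by auto
      show "\<ominus> a \<in> GZ Z" if "a \<in> GZ Z" for a
        using that comp_neg Zn unfolding GZ_def by auto
      show "a \<oplus> b \<in> GZ Z" if "a \<in> GZ Z" "b \<in> GZ Z" for a b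
        using that comp_add Za unfolding GZ_def by auto
    qed
    show "x \<otimes> a \<in> GZ Z" if "a \<in> GZ Z" "x \<in> carrier R" for a x using L that by blast
    show "a \<otimes> x \<in> GZ Z" if "a \<in> GZ Z" "x \<in> carrier R" for a x
      using L[OF that] that m_comm unfolding GZ_def by auto
  qed
qed

lemma GZ_Idl:
  assumes "ideal (GZ Z) R" "H \<subseteq> carrier R" "\<And>h i. h \<in> H \<Longrightarrow> comp h i \<in> Z i"
  shows "Idl H \<subseteq> GZ Z"
  using assms by (intro genideal_minimal) (auto simp: GZ_def)

inductive Vp :: "'a set \<Rightarrow> nat \<Rightarrow> 'a \<Rightarrow> bool" for X where
  base: "c \<in> Bg 0 \<Longrightarrow> Vp X 0 c"
| zero: "Vp X n \<zero>"
| add: "Vp X n a \<Longrightarrow> Vp X n b \<Longrightarrow> Vp X n (a \<oplus> b)"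
| mul: "Vp X n a \<Longrightarrow> g \<in> X \<Longrightarrow> Vp X (Suc n) (g \<otimes> a)"

lemma Vp_Bg: assumes X: "X \<subseteq> Bg 1" shows "Vp X n a \<Longrightarrow> a \<in> Bg n"
proof (induction rule: Vp.induct)
  case (mul n a g) then show ?case using Bg_mult[of g 1 a n] X by auto
qed (auto simp: Bg_zero Bg_add)

lemma Vp_carr: "X \<subseteq> Bg 1 \<Longrightarrow> Vp X n a \<Longrightarrow> a \<in> carrier R"
  using Vp_Bg Bg_carr by blast

lemma Vp_neg: assumes X: "X \<subseteq> Bg 1" shows "Vp X n a \<Longrightarrow> Vp X n (\<ominus> a)"
proof (induction rule: Vp.induct)
  case (base c) then show ?case by (simp add: Bg_neg Vp.base)
next
  case (zero n) then show ?case by (simp add: Vp.zero)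
next
  case (add n a b)
  then have "\<ominus> (a \<oplus> b) = \<ominus> a \<oplus> \<ominus> b" using Vp_carr[OF X] by (simp add: minus_add)
  then show ?case using add Vp.add by simp
next
  case (mul n a g)
  have g: "g \<in> carrier R" using X mul Bg_carr by blast
  then have "\<ominus> (g \<otimes> a) = g \<otimes> \<ominus> a" using Vp_carr[OF X] mul by (auto simp: r_minus)
  then show ?case using mul Vp.mul by simp
qed

lemma Vp_scal: assumes X: "X \<subseteq> Bg 1" and c: "c \<in> Bg 0" shows "Vp X n a \<Longrightarrow> Vp X n (c \<otimes> a)"
proof (induction rule: Vp.induct)
  case (base c') then show ?case using Bg_mult[OF c base] by (simp add: Vp.base)
next
  case (zero n) have "c \<in> carrier R" using c Bg_carr by blast
  then show ?case by (auto simp: Vp.zero)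
next
  case (add n a b)
  have "c \<in> carrier R" using c Bg_carr by blast
  then have "c \<otimes> (a \<oplus> b) = c \<otimes> a \<oplus> c \<otimes> b" using Vp_carr[OF X] add by (auto simp: r_distr)
  then show ?case using add Vp.add by simp
next
  case (mul n a g)
  have g: "g \<in> carrier R" "c \<in> carrier R" using X mul c Bg_carr by blast+
  then have "c \<otimes> (g \<otimes> a) = g \<otimes> (c \<otimes> a)" using Vp_carr[OF X] mul by (auto simp: m_lcomm)
  then show ?case using mul Vp.mul by simp
qed

lemma Vp_mult: assumes X: "X \<subseteq> Bg 1" shows "Vp X i a \<Longrightarrow> Vp X j b \<Longrightarrow> Vp X (i+j) (a \<otimes> b)"
proof (induction rule: Vp.induct)
  case (base c) then show ?case using Vp_scal[OF X] by simp
next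
  case (zero n) then show ?case using Vp_carr[OF X] by (auto simp: Vp.zero)
next
  case (add n a a')
  then have "(a \<oplus> a') \<otimes> b = a \<otimes> b \<oplus> a' \<otimes> b" using Vp_carr[OF X] by (auto simp: l_distr)
  then show ?case using add Vp.add by simp
next
  case (mul n a g)
  have g: "g \<in> carrier R" using X mul Bg_carr by blast
  then have "(g \<otimes> a) \<otimes> b = g \<otimes> (a \<otimes> b)" using Vp_carr[OF X] mul by (auto simp: m_assoc)
  then show ?case using mul Vp.mul by simp
qed

lemma gen_Vp: assumes X: "X \<subseteq> Bg 1"
  shows "r \<in> generate_ring R (Bg 0 \<union> X) \<Longrightarrow> Vp X n (comp r n)"
proof (induction arbitrary: n rule: generate_ring.induct)
  case one then show ?case using comp_homog'[OF Bg_one] by (auto simp: Vp.base Bg_one Vp.zero)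
next
  case (incl h)
  show ?case
  proof (cases "h \<in> Bg 0")
    case True then show ?thesis using comp_homog'[OF True] by (auto simp: Vp.base Vp.zero)
  next
    case False
    then have h: "h \<in> X" "h \<in> Bg 1" using incl X by auto
    have "h \<in> carrier R" using h Bg_carr by blast
    then have "Vp X 1 h" using Vp.mul[OF Vp.base[OF Bg_one] h(1)] by auto
    then show ?thesis using comp_homog'[OF h(2)] by (auto simp: Vp.zero)
  qed
next
  case (a_inv h)
  have "h \<in> carrier R" using a_inv(1) generate_ring_in_carrier[of "Bg 0 \<union> X"] X Bg_carr by blast
  then show ?case using a_inv comp_neg Vp_neg[OF X] by auto
next
  case (eng_add h1 h2)
  have "h1 \<in> carrier R" "h2 \<in> carrier R"
    using eng_add(1,2) generate_ring_in_carrier[of "Bg 0 \<union> X"] X Bg_carr by blast+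
  then show ?case using eng_add comp_add Vp.add by auto
next
  case (eng_mult h1 h2)
  have c: "h1 \<in> carrier R" "h2 \<in> carrier R"
    using eng_mult(1,2) generate_ring_in_carrier[of "Bg 0 \<union> X"] X Bg_carr by blast+
  have "comp (h1 \<otimes> h2) n \<in> {a. Vp X n a}"
    by (rule comp_mult_in[where ZA="\<lambda>n. {a. Vp X n a}" and ZB="\<lambda>n. {a. Vp X n a}"])
      (use c eng_mult Vp_Bg[OF X] Vp_carr[OF X] Vp_mult[OF X] Vp.zero Vp.add in auto)
  then show ?case by simp
qed


lemma ip_0[simp]: "ideal_power R I 0 = carrier R" by (simp add: ideal_power_def)
lemma ip_Suc: "ideal_power R I (Suc n) = ideal_prod R I (ideal_power R I n)" by (simp add: ideal_power_def)

lemma ip_ideal: "ideal I R \<Longrightarrow> ideal (ideal_power R I n) R"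
  by (induction n) (auto simp: ip_Suc oneideal ideal_prod_is_ideal)

lemma ip_anti: "ideal I R \<Longrightarrow> n \<le> n' \<Longrightarrow> ideal_power R I n' \<subseteq> ideal_power R I n"
proof (induction n' arbitrary: n)
  case 0 then show ?case by simp
next
  case (Suc n')
  have "ideal_power R I (Suc n') \<subseteq> ideal_power R I n'"
    using ideal_prod_inter[OF Suc(2) ip_ideal[OF Suc(2)]] by (auto simp: ip_Suc)
  show ?case
  proof (cases "n = Suc n'")
    case False then have "n \<le> n'" using Suc(3) by simp
    then show ?thesis using Suc(1)[OF Suc(2)] \<open>ideal_power R I (Suc n') \<subseteq> ideal_power R I n'\<close> by blast
  qed simp
qed

lemma iprod_mono:
  assumes "I \<subseteq> I'" "J \<subseteq> J'" shows "ideal_prod R I J \<subseteq> ideal_prod R I' J'"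
proof
  fix z assume "z \<in> ideal_prod R I J" then show "z \<in> ideal_prod R I' J'"
    by (induction rule: ideal_prod.induct) (use assms in \<open>auto intro: ideal_prod.intros\<close>)
qed

lemma ip_mono: "I \<subseteq> I' \<Longrightarrow> ideal_power R I n \<subseteq> ideal_power R I' n"
  by (induction n) (auto simp: ip_Suc intro: iprod_mono[THEN subsetD])

lemma ideal_add_closed: "ideal I R \<Longrightarrow> a \<in> I \<Longrightarrow> b \<in> I \<Longrightarrow> a \<oplus> b \<in> I"
  by (simp add: additive_subgroup.a_closed ideal.axioms(1))
lemma ideal_zero: "ideal I R \<Longrightarrow> \<zero> \<in> I"
  by (simp add: additive_subgroup.zero_closed ideal.axioms(1))
lemma ideal_carr: "ideal I R \<Longrightarrow> I \<subseteq> carrier R"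
  by (simp add: additive_subgroup.a_subset ideal.axioms(1))

definition Dz :: "nat \<Rightarrow> nat \<Rightarrow> 'a set" where
  "Dz n i = (if i < n then {\<zero>} else Bg i)"

lemma Dz_add: "u \<in> Dz n i \<Longrightarrow> v \<in> Dz n i \<Longrightarrow> u \<oplus> v \<in> Dz n i"
  by (auto simp: Dz_def Bg_add)

lemma Dz_ideal: "ideal (GZ (Dz n)) R"
proof (rule GZ_ideal)
  show "u \<otimes> v \<in> Dz n (j + i)" if "u \<in> Bg j" "v \<in> Dz n i" for i j u v
  proof (cases "i < n")
    case True then show ?thesis using that Bg_in_carr by (auto simp: Dz_def Bg_zero)
  next
    case False then show ?thesis using that Bg_mult by (auto simp: Dz_def)
  qed
qed (auto simp: Dz_def Bg_zero Bg_add Bg_neg)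

lemma m_def': "hom_max_ideal R Bg = Idl (\<Union>i\<in>{1..}. Bg i)" by (simp add: hom_max_ideal_def)

lemma m_ideal: "ideal (hom_max_ideal R Bg) R"
  unfolding m_def' by (rule genideal_ideal) (use Bg_carr in auto)

lemma Bg_m: "i \<ge> 1 \<Longrightarrow> Bg i \<subseteq> hom_max_ideal R Bg"
  unfolding m_def' using genideal_self[of "\<Union>i\<in>{1..}. Bg i"] Bg_carr by auto

lemma m_Dz: "hom_max_ideal R Bg \<subseteq> GZ (Dz 1)"
  unfolding m_def'
proof (rule GZ_Idl[OF Dz_ideal])
  show "(\<Union>i\<in>{1..}. Bg i) \<subseteq> carrier R" using Bg_carr by auto
  fix h i assume "h \<in> (\<Union>i\<in>{1..}. Bg i)"
  then obtain j where "j \<ge> 1" "h \<in> Bg j" by auto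
  then show "comp h i \<in> Dz 1 i" using comp_homog'[of h j i] by (auto simp: Dz_def Bg_zero)
qed

abbreviation "mp n \<equiv> ideal_power R (hom_max_ideal R Bg) n"

lemma mp_ideal: "ideal (mp n) R" using ip_ideal[OF m_ideal] .

lemma mp_Dz: "mp n \<subseteq> GZ (Dz n)"
proof (induction n)
  case 0 then show ?case by (auto simp: GZ_def Dz_def comp_in)
next
  case (Suc n)
  show ?case
  proof
    fix z assume "z \<in> mp (Suc n)"
    then have "z \<in> ideal_prod R (hom_max_ideal R Bg) (mp n)" by (simp add: ip_Suc)
    then show "z \<in> GZ (Dz (Suc n))"
    proof (induction rule: ideal_prod.induct)
      case (prod a b)
      have a: "a \<in> GZ (Dz 1)" using prod m_Dz by blast
      have b: "b \<in> GZ (Dz n)" using prod Suc by blast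
      have c: "a \<in> carrier R" "b \<in> carrier R" using a b by (auto simp: GZ_def)
      have "comp (a \<otimes> b) k \<in> Dz (Suc n) k" for k
      proof (rule comp_mult_in[where ZA="Dz 1" and ZB="Dz n"])
        show "u \<otimes> v \<in> Dz (Suc n) (i + j)" if "u \<in> Dz 1 i" "v \<in> Dz n j" for i j u v
        proof -
          have u: "u \<in> Bg i" "v \<in> Bg j" using that Bg_zero by (auto simp: Dz_def split: if_splits)
          show ?thesis
          proof (cases "i + j < Suc n")
            case True
            then have "u = \<zero> \<or> v = \<zero>" using that by (auto simp: Dz_def split: if_splits)
            then have "u \<otimes> v = \<zero>" using u Bg_in_carr by auto
            then show ?thesis using True by (simp add: Dz_def)
          next
            case False then show ?thesis using Bg_mult[OF u] by (simp add: Dz_def)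
          qed
        qed
      qed (use a b c in \<open>auto simp: GZ_def Dz_def Bg_zero Bg_add Bg_carr[THEN subsetD]\<close>)
      then show ?case using c by (auto simp: GZ_def)
    next
      case (sum s1 s2)
      then show ?case using comp_add Dz_add by (simp add: GZ_def)
    qed
  qed
qed

lemma G_ex: "\<exists>G. finite G \<and> G \<subseteq> Bg 1 \<and> carrier R = generate_ring R (Bg 0 \<union> G)"
  using sg unfolding standard_graded_def by auto

lemma Bg_Vp: obtains G where "finite G" "G \<subseteq> Bg 1" "carrier R = generate_ring R (Bg 0 \<union> G)"
  "\<And>y n. y \<in> Bg n \<Longrightarrow> Vp G n y"
proof -
  obtain G where G: "finite G" "G \<subseteq> Bg 1" "carrier R = generate_ring R (Bg 0 \<union> G)" using G_ex by blast
  have "Vp G n y" if "y \<in> Bg n" for y n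
  proof -
    have "y \<in> carrier R" using that Bg_carr by blast
    then have "Vp G n (comp y n)" using gen_Vp[OF G(2)] G(3) by auto
    then show ?thesis using comp_homog'[OF that] by simp
  qed
  then show ?thesis using that G by blast
qed

lemma Bg_mp: "Bg k \<subseteq> mp k"
proof -
  obtain G where G: "G \<subseteq> Bg 1" "\<And>y n. y \<in> Bg n \<Longrightarrow> Vp G n y" using Bg_Vp by metis
  have "Vp G n v \<Longrightarrow> v \<in> mp n" for n v
  proof (induction rule: Vp.induct)
    case (base c) then show ?case using Bg_carr by auto
  next
    case (zero n) then show ?case using ideal_zero[OF mp_ideal] by blast
  next
    case (add n a b) then show ?case using ideal_add_closed[OF mp_ideal] by blast
  next
    case (mul n a g)
    have "g \<in> hom_max_ideal R Bg" using mul G(1) Bg_m[of 1] by auto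
    then show ?case using mul by (simp add: ip_Suc ideal_prod.prod)
  qed
  then show ?thesis using G by blast
qed

definition ZJ :: "'a set \<Rightarrow> nat \<Rightarrow> nat \<Rightarrow> 'a set" where
  "ZJ P n i = {z \<in> Bg i. (i < n \<longrightarrow> z = \<zero>) \<and> (i = n \<longrightarrow> z \<in> P)}"

lemma ZJ_ideal: assumes P: "subring P R" "Bg 0 \<subseteq> P" shows "ideal (GZ (ZJ P n)) R"
proof (rule GZ_ideal)
  show "u \<otimes> v \<in> ZJ P n (j + i)" if "u \<in> Bg j" "v \<in> ZJ P n i" for i j u v
  proof -
    have uv: "u \<otimes> v \<in> Bg (j+i)" using that Bg_mult by (auto simp: ZJ_def)
    have uc: "u \<in> carrier R" using that Bg_carr by blast
    show ?thesis
    proof (cases "i < n")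
      case True then show ?thesis using that uc subringE(2)[OF P(1)] by (auto simp: ZJ_def Bg_zero)
    next
      case False
      then show ?thesis using that uv P subringE(6)[OF P(1)] subringE(2)[OF P(1)] by (auto simp: ZJ_def)
    qed
  qed
qed (use P subringE(2,5,7)[OF P(1)] in \<open>auto simp: ZJ_def Bg_zero Bg_add Bg_neg\<close>)


end

locale sg2 = sg + fixes X1 X2 assumes X1: "X1 \<subseteq> Bg 1" and X2: "X2 \<subseteq> Bg 1"
begin

abbreviation "I1 \<equiv> Idl X1"
abbreviation "J2 \<equiv> Idl X2"
abbreviation "Jp n \<equiv> ideal_power R J2 n"
abbreviation "AA \<equiv> generate_ring R (Bg 0 \<union> (X1 \<union> X2))"
abbreviation "SS \<equiv> generate_ring R (Bg 0 \<union> X1)"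
definition T :: "nat \<Rightarrow> 'a set" where
  "T n = ideal_prod R I1 (mp (n - 1)) <+> Jp n"

lemma X1c: "X1 \<subseteq> carrier R" using X1 Bg_carr by blast
lemma X2c: "X2 \<subseteq> carrier R" using X2 Bg_carr by blast
lemma I1_ideal: "ideal I1 R" using genideal_ideal X1c by blast
lemma J2_ideal: "ideal J2 R" using genideal_ideal X2c by blast
lemma Jp_ideal: "ideal (Jp n) R" using ip_ideal[OF J2_ideal] .
lemma I1mp_ideal: "ideal (ideal_prod R I1 (mp k)) R" using ideal_prod_is_ideal[OF I1_ideal mp_ideal] .
lemma T_ideal: "ideal (T n) R" unfolding T_def using add_ideals[OF I1mp_ideal Jp_ideal] .
lemma I1_m: "I1 \<subseteq> hom_max_ideal R Bg" using genideal_minimal[OF m_ideal] X1 Bg_m[of 1] by auto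
lemma J2_m: "J2 \<subseteq> hom_max_ideal R Bg" using genideal_minimal[OF m_ideal] X2 Bg_m[of 1] by auto

lemma AA_sub: "subring AA R" using generate_ring_is_subring X1c X2c Bg_carr by auto
lemma SS_sub: "subring SS R" using generate_ring_is_subring X1c Bg_carr by auto
lemma SS_AA: "SS \<subseteq> AA"
  by (rule generate_ring_min_subring1[OF _ AA_sub]) (use X1c Bg_carr in \<open>auto intro: generate_ring.incl\<close>)
lemma B0_SS: "Bg 0 \<subseteq> SS" by (auto intro: generate_ring.incl)
lemma X1_SS: "X1 \<subseteq> SS" by (auto intro: generate_ring.incl)
lemma B0_AA: "Bg 0 \<subseteq> AA" by (auto intro: generate_ring.incl)
lemma X2_AA: "X2 \<subseteq> AA" by (auto intro: generate_ring.incl)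

lemma T_sub_mp: "1 \<le> n \<Longrightarrow> T n \<subseteq> mp n"
proof -
  assume n: "1 \<le> n"
  have 1: "ideal_prod R I1 (mp (n - 1)) \<subseteq> mp n"
    using iprod_mono[OF I1_m, of "mp (n-1)" "mp (n-1)"] n ip_Suc[of _ "n-1"] by (cases n) auto
  have 2: "Jp n \<subseteq> mp n" using ip_mono[OF J2_m] .
  show ?thesis unfolding T_def set_add_def'
    using 1 2 ideal_add_closed[OF mp_ideal] by blast
qed

lemma T_anti: "n \<le> i \<Longrightarrow> T i \<subseteq> T n"
proof -
  assume "n \<le> i"
  then have 1: "ideal_prod R I1 (mp (i - 1)) \<subseteq> ideal_prod R I1 (mp (n - 1))"
    using iprod_mono[of I1 I1 "mp (i-1)" "mp (n-1)"] ip_anti[OF m_ideal, of "n-1" "i-1"] by auto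
  have 2: "Jp i \<subseteq> Jp n" using ip_anti[OF J2_ideal] \<open>n \<le> i\<close> .
  show ?thesis unfolding T_def set_add_def' using 1 2 by blast
qed

lemma KEYS: assumes "Vp X1 j u" shows "0 < j \<Longrightarrow> v \<in> Bg l \<Longrightarrow> u \<otimes> v \<in> ideal_prod R I1 (mp (j + l - 1))"
  using assms
proof (induction arbitrary: v rule: Vp.induct)
  case (base c) then show ?case by simp
next
  case (zero n) then show ?case using ideal_zero[OF I1mp_ideal] Bg_in_carr by auto
next
  case (add n a b)
  have "(a \<oplus> b) \<otimes> v = a \<otimes> v \<oplus> b \<otimes> v" using add Vp_carr[OF X1] Bg_in_carr by (auto simp: l_distr)
  then show ?case using add ideal_add_closed[OF I1mp_ideal] by auto
next
  case (mul n a g)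
  have c: "g \<in> carrier R" "a \<in> carrier R" "v \<in> carrier R" using mul X1c Vp_carr[OF X1] Bg_in_carr by auto
  have "a \<otimes> v \<in> Bg (n + l)" using Bg_mult Vp_Bg[OF X1 mul(1)] mul by blast
  then have "a \<otimes> v \<in> mp (n + l)" using Bg_mp by blast
  moreover have "g \<in> I1" using mul genideal_self[OF X1c] by blast
  ultimately have "g \<otimes> (a \<otimes> v) \<in> ideal_prod R I1 (mp (n + l))" by (simp add: ideal_prod.prod)
  then show ?case using c by (simp add: m_assoc)
qed

lemma MUL: assumes g: "g \<in> hom_max_ideal R Bg"
  shows "u \<in> ideal_prod R I1 (mp k) \<Longrightarrow> g \<otimes> u \<in> ideal_prod R I1 (mp (Suc k))"
proof (induction rule: ideal_prod.induct)
  case (prod a b)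
  have c: "g \<in> carrier R" "a \<in> carrier R" "b \<in> carrier R"
    using g prod ideal_carr[OF m_ideal] ideal_carr[OF I1_ideal] ideal_carr[OF mp_ideal] by blast+
  have "g \<otimes> b \<in> mp (Suc k)" using g prod by (simp add: ip_Suc ideal_prod.prod)
  then have "a \<otimes> (g \<otimes> b) \<in> ideal_prod R I1 (mp (Suc k))" using prod by (simp add: ideal_prod.prod)
  then show ?case using c by (simp add: m_lcomm)
next
  case (sum s1 s2)
  have c: "g \<in> carrier R" "s1 \<in> carrier R" "s2 \<in> carrier R"
    using g sum ideal_carr[OF m_ideal] ideal_carr[OF I1mp_ideal] by blast+
  then show ?case using sum ideal_add_closed[OF I1mp_ideal] by (simp add: r_distr)
qed

lemma KEYA: "Vp (X1 \<union> X2) i v \<Longrightarrow> \<exists>u w. v = u \<oplus> w \<and> u \<in> ideal_prod R I1 (mp (i - 1)) \<and> w \<in> Jp i"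
proof (induction rule: Vp.induct)
  case (base c)
  have "c = \<zero> \<oplus> c" using Bg_in_carr[OF base] by simp
  moreover have "\<zero> \<in> ideal_prod R I1 (mp (0 - 1))" using ideal_zero[OF I1mp_ideal] by blast
  moreover have "c \<in> Jp 0" using Bg_in_carr[OF base] by simp
  ultimately show ?case by blast
next
  case (zero n)
  then show ?case using ideal_zero[OF I1mp_ideal] ideal_zero[OF Jp_ideal] by (intro exI[of _ \<zero>]) auto
next
  case (add n a b)
  then obtain u1 w1 u2 w2 where h: "a = u1 \<oplus> w1" "u1 \<in> ideal_prod R I1 (mp (n - 1))" "w1 \<in> Jp n"
    "b = u2 \<oplus> w2" "u2 \<in> ideal_prod R I1 (mp (n - 1))" "w2 \<in> Jp n" by blast
  have c: "u1 \<in> carrier R" "u2 \<in> carrier R" "w1 \<in> carrier R" "w2 \<in> carrier R"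
    using h ideal_carr[OF I1mp_ideal] ideal_carr[OF Jp_ideal] by blast+
  have "a \<oplus> b = (u1 \<oplus> u2) \<oplus> (w1 \<oplus> w2)" using h c by (simp add: a_ac)
  then show ?case using h ideal_add_closed[OF I1mp_ideal] ideal_add_closed[OF Jp_ideal] by blast
next
  case (mul n a g)
  have ac: "a \<in> carrier R" using Vp_carr[OF _ mul(1)] X1 X2 by auto
  have gc: "g \<in> carrier R" using mul X1c X2c by auto
  show ?case
  proof (cases "g \<in> X1")
    case True
    have "a \<in> mp n" using Vp_Bg[OF _ mul(1)] X1 X2 Bg_mp by auto
    then have "g \<otimes> a \<in> ideal_prod R I1 (mp (Suc n - 1))"
      using True genideal_self[OF X1c] by (auto intro: ideal_prod.prod)
    then show ?thesis using ideal_zero[OF Jp_ideal] gc ac by (intro exI[of _ "g \<otimes> a"] exI[of _ \<zero>]) auto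
  next
    case False
    then have g2: "g \<in> X2" using mul by auto
    obtain u w where h: "a = u \<oplus> w" "u \<in> ideal_prod R I1 (mp (n - 1))" "w \<in> Jp n" using mul by blast
    have c: "u \<in> carrier R" "w \<in> carrier R"
      using h ideal_carr[OF I1mp_ideal] ideal_carr[OF Jp_ideal] by blast+
    have gw: "g \<otimes> w \<in> Jp (Suc n)" using g2 genideal_self[OF X2c] h by (auto simp: ip_Suc intro: ideal_prod.prod)
    have gm: "g \<in> hom_max_ideal R Bg" using g2 X2 Bg_m[of 1] by auto
    have gu: "g \<otimes> u \<in> ideal_prod R I1 (mp (Suc n - 1))"
    proof (cases n)
      case 0
      then show ?thesis using h(2) ideal.I_l_closed[OF I1mp_ideal, of u 0 g] gc by simp
    next
      case (Suc k)
      then show ?thesis using MUL[OF gm] h(2) by auto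
    qed
    have "g \<otimes> a = g \<otimes> u \<oplus> g \<otimes> w" using h c gc by (simp add: r_distr)
    then show ?thesis using gw gu by blast
  qed
qed


lemma I1mp_T: "u \<in> ideal_prod R I1 (mp (n - 1)) \<Longrightarrow> u \<in> T n"
proof -
  assume u: "u \<in> ideal_prod R I1 (mp (n - 1))"
  then have "u \<in> carrier R" using ideal_carr[OF I1mp_ideal] by blast
  then have "u = u \<oplus> \<zero>" by simp
  then show ?thesis unfolding T_def set_add_def' using u ideal_zero[OF Jp_ideal] by blast
qed

lemma bound_F: "finite F \<Longrightarrow> F \<subseteq> carrier R \<Longrightarrow> \<exists>N. \<forall>f\<in>F. \<forall>i>N. comp f i = \<zero>"
proof (induction F rule: finite_induct)
  case empty then show ?case by auto
next
  case (insert f F)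
  then obtain N where N: "\<forall>f\<in>F. \<forall>i>N. comp f i = \<zero>" by auto
  obtain M where M: "\<forall>i>M. comp f i = \<zero>" using comp_expand insert by blast
  show ?case using N M by (intro exI[of _ "max N M"]) auto
qed

lemma dir_back:
  assumes fq: "finite_quotient_module R SS AA"
  shows "\<exists>N. \<forall>n\<ge>N. mp n = T n"
proof -
  obtain F where F: "finite F" "F \<subseteq> carrier R"
    and rep: "\<And>b. b \<in> carrier R \<Longrightarrow> \<exists>a\<in>AA. \<exists>r. r ` F \<subseteq> SS \<and> b = a \<oplus> finsum R (\<lambda>f. r f \<otimes> f) F"
    using fq unfolding finite_quotient_module_def by blast
  obtain N where N: "\<forall>f\<in>F. \<forall>i>N. comp f i = \<zero>" using bound_F[OF F] by blast
  have SSc: "SS \<subseteq> carrier R" using subringE(1)[OF SS_sub] .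
  have AAc: "AA \<subseteq> carrier R" using subringE(1)[OF AA_sub] .
  have X12: "X1 \<union> X2 \<subseteq> Bg 1" using X1 X2 by auto
  have "mp n = T n" if n: "Suc N \<le> n" for n
  proof
    have Tid: "ideal (T n) R" by (rule T_ideal)
    have KEY1: "y \<in> T n" if i: "n \<le> i" and y: "y \<in> Bg i" for i y
    proof -
      have yc: "y \<in> carrier R" using y Bg_in_carr by blast
      obtain a r where a: "a \<in> AA" "r ` F \<subseteq> SS" "y = a \<oplus> finsum R (\<lambda>f. r f \<otimes> f) F"
        using rep[OF yc] by blast
      have ac: "a \<in> carrier R" using a AAc by blast
      have rc: "\<And>f. f \<in> F \<Longrightarrow> r f \<in> carrier R" "\<And>f. f \<in> F \<Longrightarrow> r f \<in> SS" using a SSc by auto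
      have fc: "\<And>f. f \<in> F \<Longrightarrow> f \<in> carrier R" using F by auto
      have pf: "(\<lambda>f. r f \<otimes> f) \<in> F \<rightarrow> carrier R" using rc fc by auto
      have "y = comp y i" using comp_homog'[OF y] by simp
      also have "\<dots> = comp a i \<oplus> comp (finsum R (\<lambda>f. r f \<otimes> f) F) i"
        using a(3) comp_add ac finsum_closed[OF pf] by simp
      also have "\<dots> = comp a i \<oplus> finsum R (\<lambda>f. comp (r f \<otimes> f) i) F"
        using comp_finsum[OF F(1) pf] by simp
      also have "\<dots> \<in> T n"
      proof (rule ideal_add_closed[OF Tid])
        have "Vp (X1 \<union> X2) i (comp a i)" using gen_Vp[OF X12] a(1) by simp
        then obtain u w where uw: "comp a i = u \<oplus> w" "u \<in> ideal_prod R I1 (mp (i - 1))" "w \<in> Jp i"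
          using KEYA by blast
        then have "comp a i \<in> T i" unfolding T_def set_add_def' by blast
        then show "comp a i \<in> T n" using T_anti[OF i] by blast
        show "finsum R (\<lambda>f. comp (r f \<otimes> f) i) F \<in> T n"
        proof (rule finsum_in[OF F(1) ideal_carr[OF Tid] ideal_zero[OF Tid] ideal_add_closed[OF Tid]])
          fix f assume f: "f \<in> F"
          have "comp (r f \<otimes> f) i \<in> {z \<in> Bg i. n \<le> i \<longrightarrow> z \<in> T n}"
          proof (rule comp_mult_in[where ZA="\<lambda>j. {v. Vp X1 j v}" and ZB="\<lambda>l. if l \<le> N then Bg l else {\<zero>}"
                and ZC="\<lambda>k. {z \<in> Bg k. n \<le> k \<longrightarrow> z \<in> T n}"])
            show "r f \<in> carrier R" "f \<in> carrier R" using rc fc f by auto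
            show "comp (r f) j \<in> {v. Vp X1 j v}" for j using gen_Vp[OF X1] rc f by auto
            show "{v. Vp X1 j v} \<subseteq> Bg j" for j using Vp_Bg[OF X1] by auto
            show "comp f l \<in> (if l \<le> N then Bg l else {\<zero>})" for l
              using N f comp_in fc by auto
            show "(if l \<le> N then Bg l else {\<zero>}) \<subseteq> Bg l" for l using Bg_zero by auto
            show "{z \<in> Bg i. n \<le> i \<longrightarrow> z \<in> T n} \<subseteq> carrier R" using Bg_carr by auto
            show "\<zero> \<in> {z \<in> Bg i. n \<le> i \<longrightarrow> z \<in> T n}" using Bg_zero ideal_zero[OF Tid] by auto
            show "u \<oplus> v \<in> {z \<in> Bg i. n \<le> i \<longrightarrow> z \<in> T n}"
              if "u \<in> {z \<in> Bg i. n \<le> i \<longrightarrow> z \<in> T n}" "v \<in> {z \<in> Bg i. n \<le> i \<longrightarrow> z \<in> T n}" for u v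
              using that Bg_add ideal_add_closed[OF Tid] by auto
            show "u \<otimes> v \<in> {z \<in> Bg (j + l). n \<le> j + l \<longrightarrow> z \<in> T n}"
              if u: "u \<in> {v. Vp X1 j v}" and v: "v \<in> (if l \<le> N then Bg l else {\<zero>})" for j l u v
            proof -
              have ub: "u \<in> Bg j" using u Vp_Bg[OF X1] by auto
              have vb: "v \<in> Bg l" using v Bg_zero by (auto split: if_splits)
              have uvb: "u \<otimes> v \<in> Bg (j + l)" using Bg_mult[OF ub vb] .
              have "u \<otimes> v \<in> T n" if jl: "n \<le> j + l"
              proof (cases "l \<le> N")
                case False
                then have "v = \<zero>" using v by auto
                then show ?thesis using ub Bg_in_carr ideal_zero[OF Tid] by auto
              next
                case True
                then have "0 < j" using n jl by auto
                then have "u \<otimes> v \<in> ideal_prod R I1 (mp (j + l - 1))" using KEYS u vb by auto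
                moreover have "ideal_prod R I1 (mp (j + l - 1)) \<subseteq> ideal_prod R I1 (mp (n - 1))"
                  using iprod_mono[of I1 I1] ip_anti[OF m_ideal, of "n-1" "j+l-1"] jl by auto
                ultimately show ?thesis using I1mp_T by blast
              qed
              then show ?thesis using uvb by auto
            qed
          qed
          then show "comp (r f \<otimes> f) i \<in> T n" using i by auto
        qed
      qed
      finally show ?thesis .
    qed
    show "mp n \<subseteq> T n"
    proof
      fix z assume z: "z \<in> mp n"
      then have zg: "z \<in> GZ (Dz n)" using mp_Dz by blast
      then have zc: "z \<in> carrier R" by (simp add: GZ_def)
      obtain K where K: "z = finsum R (comp z) {..K}" using comp_expand[OF zc] by blast
      have "finsum R (comp z) {..K} \<in> T n"
      proof (rule finsum_in[OF _ ideal_carr[OF Tid] ideal_zero[OF Tid] ideal_add_closed[OF Tid]])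
        fix i
        show "comp z i \<in> T n"
        proof (cases "i < n")
          case True
          then have "comp z i = \<zero>" using zg unfolding GZ_def Dz_def by (metis (mono_tags, lifting) mem_Collect_eq singletonD)
          then show ?thesis using ideal_zero[OF Tid] by simp
        next
          case False
          then show ?thesis using KEY1[OF _ comp_in[OF zc, of i]] by simp
        qed
      qed simp
      then show "z \<in> T n" using K by simp
    qed
    show "T n \<subseteq> mp n" using T_sub_mp n by auto
  qed
  then show ?thesis by blast
qed


lemma ZJ_mult: assumes P: "subring P R"
  shows "u \<in> ZJ P a i \<Longrightarrow> v \<in> ZJ P b j \<Longrightarrow> u \<otimes> v \<in> ZJ P (a + b) (i + j)"
proof -
  assume u: "u \<in> ZJ P a i" and v: "v \<in> ZJ P b j"
  have ub: "u \<in> Bg i" "v \<in> Bg j" using u v by (auto simp: ZJ_def)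
  have uvb: "u \<otimes> v \<in> Bg (i+j)" using Bg_mult[OF ub] .
  have z: "\<zero> \<in> P" using subringE(2)[OF P] .
  show ?thesis
  proof (cases "i < a \<or> j < b")
    case True
    then have "u = \<zero> \<or> v = \<zero>" using u v by (auto simp: ZJ_def)
    then have "u \<otimes> v = \<zero>" using ub Bg_in_carr by auto
    then show ?thesis using z Bg_zero by (auto simp: ZJ_def)
  next
    case False
    then show ?thesis using u v uvb subringE(6)[OF P] by (auto simp: ZJ_def)
  qed
qed

lemma ZJ_add: "subring P R \<Longrightarrow> u \<in> ZJ P a i \<Longrightarrow> v \<in> ZJ P a i \<Longrightarrow> u \<oplus> v \<in> ZJ P a i"
  using subringE(7) by (auto simp: ZJ_def Bg_add)

lemma Idl_ZJ: assumes P: "subring P R" "Bg 0 \<subseteq> P" and X: "X \<subseteq> Bg 1" "X \<subseteq> P"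
  shows "Idl X \<subseteq> GZ (ZJ P 1)"
proof (rule GZ_Idl[OF ZJ_ideal[OF P]])
  show "X \<subseteq> carrier R" using X Bg_carr by blast
  fix h i assume h: "h \<in> X"
  then have "h \<in> Bg 1" using X by auto
  then show "comp h i \<in> ZJ P 1 i" using comp_homog'[of h 1 i] h X Bg_zero by (auto simp: ZJ_def)
qed

lemma Jp_ZJ: "Jp n \<subseteq> GZ (ZJ AA n)"
proof (induction n)
  case 0 then show ?case using comp_in B0_AA by (auto simp: GZ_def ZJ_def)
next
  case (Suc n)
  have J2Z: "J2 \<subseteq> GZ (ZJ AA 1)" using Idl_ZJ[OF AA_sub B0_AA X2 X2_AA] .
  show ?case
  proof
    fix z assume "z \<in> Jp (Suc n)"
    then have "z \<in> ideal_prod R J2 (Jp n)" by (simp add: ip_Suc)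
    then show "z \<in> GZ (ZJ AA (Suc n))"
    proof (induction rule: ideal_prod.induct)
      case (prod a b)
      have a: "a \<in> GZ (ZJ AA 1)" using prod J2Z by blast
      have b: "b \<in> GZ (ZJ AA n)" using prod Suc by blast
      have c: "a \<in> carrier R" "b \<in> carrier R" using a b by (auto simp: GZ_def)
      have "comp (a \<otimes> b) k \<in> ZJ AA (Suc n) k" for k
      proof (rule comp_mult_in[where ZA="ZJ AA 1" and ZB="ZJ AA n"])
        show "u \<otimes> v \<in> ZJ AA (Suc n) (i + j)" if "u \<in> ZJ AA 1 i" "v \<in> ZJ AA n j" for i j u v
          using ZJ_mult[OF AA_sub that] by simp
        show "ZJ AA (Suc n) k \<subseteq> carrier R" using Bg_carr by (auto simp: ZJ_def)
        show "\<zero> \<in> ZJ AA (Suc n) k" using Bg_zero subringE(2)[OF AA_sub] by (auto simp: ZJ_def)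
        show "\<And>u v. u \<in> ZJ AA (Suc n) k \<Longrightarrow> v \<in> ZJ AA (Suc n) k \<Longrightarrow> u \<oplus> v \<in> ZJ AA (Suc n) k"
          using ZJ_add[OF AA_sub] by blast
        show "comp a i \<in> ZJ AA 1 i" for i using a by (simp add: GZ_def)
        show "comp b i \<in> ZJ AA n i" for i using b by (simp add: GZ_def)
        show "ZJ AA 1 i \<subseteq> Bg i" for i by (auto simp: ZJ_def)
        show "ZJ AA n i \<subseteq> Bg i" for i by (auto simp: ZJ_def)
      qed (use c in auto)
      then show ?case using c by (auto simp: GZ_def)
    next
      case (sum s1 s2)
      then show ?case using comp_add ZJ_add[OF AA_sub] by (simp add: GZ_def)
    qed
  qed
qed

definition pl :: "'a list \<Rightarrow> 'a" where "pl l = foldr (\<lambda>g acc. g \<otimes> acc) l \<one>"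

lemma pl_Nil[simp]: "pl [] = \<one>" by (simp add: pl_def)
lemma pl_Cons[simp]: "pl (g # l) = g \<otimes> pl l" by (simp add: pl_def)
lemma pl_carr: "set l \<subseteq> carrier R \<Longrightarrow> pl l \<in> carrier R" by (induction l) auto


lemma dir_fwd:
  assumes H: "\<exists>N. \<forall>n\<ge>N. mp n = T n"
  shows "finite_quotient_module R SS AA"
proof -
  obtain N where N: "\<And>n. N \<le> n \<Longrightarrow> mp n = T n" using H by blast
  obtain G where G: "finite G" "G \<subseteq> Bg 1" "carrier R = generate_ring R (Bg 0 \<union> G)"
      "\<And>y n. y \<in> Bg n \<Longrightarrow> Vp G n y"
  proof (rule Bg_Vp)
    fix G' assume "finite G'" "G' \<subseteq> Bg 1" "carrier R = generate_ring R (Bg 0 \<union> G')"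
      "\<And>y n. y \<in> Bg n \<Longrightarrow> Vp G' n y"
    then show thesis by (rule that)
  qed
  have Gc: "G \<subseteq> carrier R" using G Bg_carr by blast
  have SSc: "SS \<subseteq> carrier R" using subringE(1)[OF SS_sub] .
  have AAc: "AA \<subseteq> carrier R" using subringE(1)[OF AA_sub] .
  have SS0: "\<zero> \<in> SS" using subringE(2)[OF SS_sub] .
  define M where "M = Suc N"
  define F where "F = pl ` {l. set l \<subseteq> G \<and> length l \<le> M}"
  have Ffin: "finite F" unfolding F_def by (rule finite_imageI[OF finite_lists_length_le[OF G(1)]])
  have Fc: "F \<subseteq> carrier R"
  proof
    fix f assume "f \<in> F"
    then obtain l where "set l \<subseteq> G" "f = pl l" unfolding F_def by blast
    then show "f \<in> carrier R" using pl_carr Gc by blast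
  qed
  define SpanF where "SpanF = {t. \<exists>r. r ` F \<subseteq> SS \<and> t = finsum R (\<lambda>f. r f \<otimes> f) F}"
  define Q where "Q = {y. \<exists>a\<in>AA. \<exists>t\<in>SpanF. y = a \<oplus> t}"
  have pc: "(\<lambda>f. r f \<otimes> f) \<in> F \<rightarrow> carrier R" if "r ` F \<subseteq> SS" for r
  proof
    fix f assume f: "f \<in> F"
    then have "r f \<in> carrier R" "f \<in> carrier R" using that SSc Fc by blast+
    then show "r f \<otimes> f \<in> carrier R" by simp
  qed
  have Sp_c: "SpanF \<subseteq> carrier R"
  proof
    fix t assume "t \<in> SpanF"
    then obtain r where r: "r ` F \<subseteq> SS" "t = finsum R (\<lambda>f. r f \<otimes> f) F" unfolding SpanF_def by blast
    then show "t \<in> carrier R" using finsum_closed[OF pc[OF r(1)]] by simp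
  qed
  have Sp_0: "\<zero> \<in> SpanF"
  proof -
    have "finsum R (\<lambda>f. \<zero> \<otimes> f) F = finsum R (\<lambda>f. \<zero>) F"
      by (rule finsum_cong') (use Fc in auto)
    then have "finsum R (\<lambda>f. (\<lambda>_. \<zero>) f \<otimes> f) F = \<zero>" by simp
    then show ?thesis unfolding SpanF_def using SS0 by (intro CollectI exI[of _ "\<lambda>_. \<zero>"]) auto
  qed
  have Sp_add: "t1 \<oplus> t2 \<in> SpanF" if hyp: "t1 \<in> SpanF" "t2 \<in> SpanF" for t1 t2
  proof -
    obtain r1 r2 where r: "r1 ` F \<subseteq> SS" "t1 = finsum R (\<lambda>f. r1 f \<otimes> f) F"
      "r2 ` F \<subseteq> SS" "t2 = finsum R (\<lambda>f. r2 f \<otimes> f) F" using hyp unfolding SpanF_def by blast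
    have r3: "(\<lambda>f. r1 f \<oplus> r2 f) ` F \<subseteq> SS" using r subringE(7)[OF SS_sub] by auto
    have rc: "r1 f \<in> carrier R" "r2 f \<in> carrier R" "f \<in> carrier R" if "f \<in> F" for f
      using that r(1,3) SSc Fc by blast+
    have "t1 \<oplus> t2 = finsum R (\<lambda>f. r1 f \<otimes> f \<oplus> r2 f \<otimes> f) F"
      using r finsum_addf[OF pc[OF r(1)] pc[OF r(3)]] by simp
    also have "\<dots> = finsum R (\<lambda>f. (r1 f \<oplus> r2 f) \<otimes> f) F"
      by (rule finsum_cong'[OF refl pc[OF r3]]) (simp add: rc l_distr)
    finally show ?thesis unfolding SpanF_def using r3 by blast
  qed
  have Sp_smul: "s \<otimes> t \<in> SpanF" if hyp: "s \<in> SS" "t \<in> SpanF" for s t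
  proof -
    obtain r where r: "r ` F \<subseteq> SS" "t = finsum R (\<lambda>f. r f \<otimes> f) F" using hyp unfolding SpanF_def by blast
    have r3: "(\<lambda>f. s \<otimes> r f) ` F \<subseteq> SS" using r that subringE(6)[OF SS_sub] by auto
    have sc: "s \<in> carrier R" using that SSc by blast
    have rc: "r f \<in> carrier R" "f \<in> carrier R" if "f \<in> F" for f
      using that r(1) SSc Fc by blast+
    have "s \<otimes> t = finsum R (\<lambda>f. s \<otimes> (r f \<otimes> f)) F"
      using r finsum_rdistr[OF Ffin sc pc[OF r(1)]] by simp
    also have "\<dots> = finsum R (\<lambda>f. (s \<otimes> r f) \<otimes> f) F"
      by (rule finsum_cong'[OF refl pc[OF r3]]) (simp add: rc sc m_assoc)
    finally show ?thesis unfolding SpanF_def using r3 by blast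
  qed
  have Qc: "Q \<subseteq> carrier R" unfolding Q_def using AAc Sp_c by auto
  have AQ: "AA \<subseteq> Q" unfolding Q_def using Sp_0 AAc by force
  have SpQ: "SpanF \<subseteq> Q" unfolding Q_def using Sp_c subringE(2)[OF AA_sub] by force
  have Q0: "\<zero> \<in> Q" using AQ subringE(2)[OF AA_sub] by blast
  have Qadd: "y1 \<oplus> y2 \<in> Q" if hyp: "y1 \<in> Q" "y2 \<in> Q" for y1 y2
  proof -
    obtain a1 t1 a2 t2 where h: "a1 \<in> AA" "t1 \<in> SpanF" "y1 = a1 \<oplus> t1" "a2 \<in> AA" "t2 \<in> SpanF" "y2 = a2 \<oplus> t2"
      using hyp unfolding Q_def by blast
    have c: "a1 \<in> carrier R" "a2 \<in> carrier R" "t1 \<in> carrier R" "t2 \<in> carrier R" using h AAc Sp_c by auto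
    have "y1 \<oplus> y2 = (a1 \<oplus> a2) \<oplus> (t1 \<oplus> t2)" using h c by (simp add: a_ac)
    then show ?thesis unfolding Q_def using h subringE(7)[OF AA_sub] Sp_add by blast
  qed
  have Qsmul: "s \<otimes> y \<in> Q" if hyp: "s \<in> SS" "y \<in> Q" for s y
  proof -
    obtain a t where h: "a \<in> AA" "t \<in> SpanF" "y = a \<oplus> t" using hyp unfolding Q_def by blast
    have c: "a \<in> carrier R" "t \<in> carrier R" "s \<in> carrier R" using h AAc Sp_c that SSc by auto
    have "s \<otimes> y = s \<otimes> a \<oplus> s \<otimes> t" using h c by (simp add: r_distr)
    moreover have "s \<otimes> a \<in> AA" using subringE(6)[OF AA_sub] that h SS_AA by blast
    ultimately show ?thesis unfolding Q_def using Sp_smul that h by blast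
  qed
  have SPAN1: "Vp G j v \<Longrightarrow> set l \<subseteq> G \<Longrightarrow> length l + j \<le> M \<Longrightarrow> pl l \<otimes> v \<in> SpanF" for j v l
  proof (induction arbitrary: l rule: Vp.induct)
    case (base c)
    let ?p = "pl l"
    have "l \<in> {l. set l \<subseteq> G \<and> length l \<le> M}" using base(2,3) by simp
    then have pF: "?p \<in> F" unfolding F_def by (rule imageI)
    have pc': "?p \<in> carrier R" using pF Fc by blast
    have cc: "c \<in> carrier R" using base Bg_in_carr by blast
    have cS: "c \<in> SS" using base(1) B0_SS by blast
    have rS: "(\<lambda>f. if f = ?p then c else \<zero>) ` F \<subseteq> SS"
    proof
      fix z assume "z \<in> (\<lambda>f. if f = ?p then c else \<zero>) ` F"
      then show "z \<in> SS" using cS SS0 by (auto split: if_splits)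
    qed
    have Pi1: "(\<lambda>f. c \<otimes> f) \<in> F \<rightarrow> carrier R"
    proof
      fix f assume "f \<in> F" then have "f \<in> carrier R" using Fc by blast
      then show "c \<otimes> f \<in> carrier R" using cc by simp
    qed
    have Pi2: "(\<lambda>f. if ?p = f then c \<otimes> f else \<zero>) \<in> F \<rightarrow> carrier R"
      using Pi1 by (auto simp: Pi_def)
    have "finsum R (\<lambda>f. (if f = ?p then c else \<zero>) \<otimes> f) F = finsum R (\<lambda>f. if ?p = f then c \<otimes> f else \<zero>) F"
    proof (rule finsum_cong'[OF refl Pi2])
      fix f assume "f \<in> F" then have "f \<in> carrier R" using Fc by blast
      then show "(if f = ?p then c else \<zero>) \<otimes> f = (if ?p = f then c \<otimes> f else \<zero>)" by auto
    qed
    also have "\<dots> = c \<otimes> ?p"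
      by (rule add.finprod_singleton[OF pF Ffin Pi1])
    also have "\<dots> = ?p \<otimes> c" using cc pc' m_comm by simp
    finally have "?p \<otimes> c = finsum R (\<lambda>f. (if f = ?p then c else \<zero>) \<otimes> f) F" by simp
    then show ?case unfolding SpanF_def using rS by blast
  next
    case (zero n)
    have "pl l \<in> carrier R" using zero Gc pl_carr by blast
    then show ?case using Sp_0 by simp
  next
    case (add n a b)
    have c: "pl l \<in> carrier R" "a \<in> carrier R" "b \<in> carrier R"
      using add.prems Gc pl_carr Vp_carr[OF G(2)] add.hyps by blast+
    have "pl l \<otimes> a \<in> SpanF" "pl l \<otimes> b \<in> SpanF" using add.IH add.prems by blast+
    then have "pl l \<otimes> a \<oplus> pl l \<otimes> b \<in> SpanF" by (rule Sp_add)
    moreover have "pl l \<otimes> (a \<oplus> b) = pl l \<otimes> a \<oplus> pl l \<otimes> b" using c by (simp add: r_distr)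
    ultimately show ?case by simp
  next
    case (mul n a g)
    have c: "pl l \<in> carrier R" "a \<in> carrier R" "g \<in> carrier R"
      using mul.prems Gc pl_carr Vp_carr[OF G(2)] mul.hyps by blast+
    have "set (g # l) \<subseteq> G" "length (g # l) + n \<le> M" using mul.prems mul.hyps by auto
    then have "pl (g # l) \<otimes> a \<in> SpanF" using mul.IH by blast
    moreover have "pl (g # l) \<otimes> a = pl l \<otimes> (g \<otimes> a)"
    proof -
      have "pl (g # l) \<otimes> a = (g \<otimes> pl l) \<otimes> a" by simp
      also have "\<dots> = (pl l \<otimes> g) \<otimes> a" using c m_comm by simp
      also have "\<dots> = pl l \<otimes> (g \<otimes> a)" using c m_assoc by simp
      finally show ?thesis .
    qed
    ultimately show ?case by simp
  qed
  have BQ: "Bg n \<subseteq> Q" for n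
  proof (induction n rule: less_induct)
    case (less n)
    show ?case
    proof
      fix y assume y: "y \<in> Bg n"
      have yc: "y \<in> carrier R" using y Bg_in_carr by blast
      show "y \<in> Q"
      proof (cases "n \<le> M")
        case True
        then have "pl [] \<otimes> y \<in> SpanF" using SPAN1[OF G(4)[OF y], of "[]"] by simp
        then show ?thesis using yc SpQ by auto
      next
        case False
        then have nN: "N \<le> n" "1 \<le> n" unfolding M_def by auto
        have "y \<in> T n" using y Bg_mp N[OF nN(1)] by blast
        then obtain u w where uw: "u \<in> ideal_prod R I1 (mp (n - 1))" "w \<in> Jp n" "y = u \<oplus> w"
          unfolding T_def set_add_def' by blast
        have uc: "u \<in> carrier R" "w \<in> carrier R" using uw ideal_carr[OF I1mp_ideal] ideal_carr[OF Jp_ideal] by blast+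
        have "y = comp y n" using comp_homog'[OF y] by simp
        also have "\<dots> = comp u n \<oplus> comp w n" using uw uc comp_add by simp
        finally have ye: "y = comp u n \<oplus> comp w n" .
        have wA: "comp w n \<in> AA" using Jp_ZJ uw(2) by (auto simp: GZ_def ZJ_def)
        have I1Z: "I1 \<subseteq> GZ (ZJ SS 1)" using Idl_ZJ[OF SS_sub B0_SS X1 X1_SS] .
        have BQ': "Bg (n - 1) \<subseteq> Q" using less nN by auto
        have "comp u n \<in> Q" using uw(1)
        proof (induction rule: ideal_prod.induct)
          case (prod a b)
          have a: "a \<in> GZ (ZJ SS 1)" using prod I1Z by blast
          have b: "b \<in> GZ (Dz (n - 1))" using prod mp_Dz by blast
          have c: "a \<in> carrier R" "b \<in> carrier R" using a b by (auto simp: GZ_def)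
          have "comp (a \<otimes> b) n \<in> {z \<in> Bg n. n = n \<longrightarrow> z \<in> Q}"
          proof (rule comp_mult_in[where ZA="ZJ SS 1" and ZB="Dz (n - 1)" and ZC="\<lambda>k. {z \<in> Bg k. k = n \<longrightarrow> z \<in> Q}"])
            show "comp a i \<in> ZJ SS 1 i" for i using a by (simp add: GZ_def)
            show "comp b i \<in> Dz (n - 1) i" for i using b by (simp add: GZ_def)
            show "ZJ SS 1 i \<subseteq> Bg i" for i by (auto simp: ZJ_def)
            show "Dz (n - 1) i \<subseteq> Bg i" for i using Bg_zero by (auto simp: Dz_def)
            show "{z \<in> Bg n. n = n \<longrightarrow> z \<in> Q} \<subseteq> carrier R" using Bg_carr by auto
            show "\<zero> \<in> {z \<in> Bg n. n = n \<longrightarrow> z \<in> Q}" using Bg_zero Q0 by auto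
            show "u \<oplus> v \<in> {z \<in> Bg n. n = n \<longrightarrow> z \<in> Q}"
              if "u \<in> {z \<in> Bg n. n = n \<longrightarrow> z \<in> Q}" "v \<in> {z \<in> Bg n. n = n \<longrightarrow> z \<in> Q}" for u v
              using that Bg_add Qadd by auto
            show "u \<otimes> v \<in> {z \<in> Bg (i + j). i + j = n \<longrightarrow> z \<in> Q}"
              if u: "u \<in> ZJ SS 1 i" and v: "v \<in> Dz (n - 1) j" for i j u v
            proof -
              have ub: "u \<in> Bg i" using u by (auto simp: ZJ_def)
              have vb: "v \<in> Bg j" using v Bg_zero by (auto simp: Dz_def split: if_splits)
              have uvb: "u \<otimes> v \<in> Bg (i + j)" using Bg_mult[OF ub vb] .
              have "u \<otimes> v \<in> Q" if ij: "i + j = n"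
              proof (cases "i = 0 \<or> j < n - 1")
                case True
                then have "u = \<zero> \<or> v = \<zero>" using u v by (auto simp: ZJ_def Dz_def)
                then have "u \<otimes> v = \<zero>" using ub vb Bg_in_carr by auto
                then show ?thesis using Q0 by simp
              next
                case False
                then have "i = 1" "j = n - 1" using ij by auto
                then have "u \<in> SS" "v \<in> Q" using u vb BQ' by (auto simp: ZJ_def)
                then show ?thesis using Qsmul by blast
              qed
              then show ?thesis using uvb by auto
            qed
          qed (use c in auto)
          then show ?case by simp
        next
          case (sum s1 s2)
          have "s1 \<in> carrier R" "s2 \<in> carrier R" using sum ideal_carr[OF I1mp_ideal] by blast+
          then show ?case using sum comp_add Qadd by simp
        qed
        then show ?thesis using ye wA AQ Qadd by auto
      qed
    qed
  qed
  have CQ: "carrier R \<subseteq> Q"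
  proof
    fix b assume bc: "b \<in> carrier R"
    obtain K where K: "b = finsum R (comp b) {..K}" using comp_expand[OF bc] by blast
    have "finsum R (comp b) {..K} \<in> Q"
      by (rule finsum_in[OF _ Qc Q0 Qadd]) (use BQ comp_in bc in auto)
    then show "b \<in> Q" using K by simp
  qed
  show ?thesis unfolding finite_quotient_module_def
  proof (intro exI[of _ F] conjI ballI)
    show "finite F" "F \<subseteq> carrier R" by (fact Ffin) (fact Fc)
    fix b assume "b \<in> carrier R"
    then have "b \<in> Q" using CQ by blast
    then show "\<exists>a\<in>AA. \<exists>r. r ` F \<subseteq> SS \<and> b = a \<oplus> finsum R (\<lambda>f. r f \<otimes> f) F"
      unfolding Q_def SpanF_def by blast
  qed
qed

end

theorem lemma2p4:
  fixes R :: "('a, 'b) ring_scheme" and Bg :: "nat \<Rightarrow> 'a set"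
    and d s :: nat and x :: "nat \<Rightarrow> 'a"
  assumes "standard_graded R Bg"
    and "krull_dim_eq R d"
    and "d \<ge> 1"
    and "\<forall>i\<in>{1..d+s}. x i \<in> Bg 1"
  shows "(\<exists>N. \<forall>n\<ge>N.
            ideal_power R (hom_max_ideal R Bg) n =
              ideal_prod R (Idl\<^bsub>R\<^esub> (x ` {1..d-1})) (ideal_power R (hom_max_ideal R Bg) (n - 1))
              <+>\<^bsub>R\<^esub> ideal_power R (Idl\<^bsub>R\<^esub> (x ` {d..d+s})) n)
         \<longleftrightarrow> finite_quotient_module R
               (generate_ring R (Bg 0 \<union> x ` {1..d-1}))
               (generate_ring R (Bg 0 \<union> x ` {1..d+s}))"
proof -
  interpret sg2 R Bg "x ` {1..d-1}" "x ` {d..d+s}"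
    by unfold_locales (use assms in auto)
  have e: "x ` {1..d+s} = x ` {1..d-1} \<union> x ` {d..d+s}"
  proof -
    have "{1..d+s} = {1..d-1} \<union> {d..d+s}" using assms(3) by auto
    then show ?thesis by (simp add: image_Un)
  qed
  show ?thesis using dir_fwd dir_back unfolding T_def e by blast
qed

end
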